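(* Let $N\ge1$, $\varepsilon\in(0,1)$, $U\in C^\infty(\mathbb{R}^d)$ and $G\in C^\infty(\mathbb{R}^d\setminus\{0\})$. On $\mathbf{X}=\mathcal{D}\times(\mathbb{R}^d)^N$ consider the vector fields $X_0=\sum_{i=1}^N\frac{p_i}{\sqrt{1+\varepsilon|p_i|^2}}\partial_{q_i}+\sum_{i=1}^N\Big(-\frac{p_i}{\sqrt{1+\varepsilon|p_i|^2}}-\nabla U(q_i)-\sum_{j\ne i}\nabla G(q_i-q_j)\Big)\partial_{p_i}$ and $X_i=\partial_{p_i}$, $i=1,\dots,N$. Then the Lie algebra generated by the family $\{X_i\}_{i=1}^N$, $\{[X_i,X_j]\}_{i,j=0}^N$, $\{[[X_i,X_j],X_k]\}_{i,j,k=0}^N,\dots$ spans the tangent space $\mathbb{R}^{2dN}$ at every point of $\mathbf{X}$ (Hörmander's condition).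
   Context: $\mathcal{D}=\{\mathbf{q}=(q_1,\dots,q_N)\in(\mathbb{R}^d)^N: q_i\ne q_j\text{ for } i\ne j\}$. These vector fields are those for which the generator of the relativistic Langevin system $dq_i=\frac{p_i}{\sqrt{1+\varepsilon|p_i|^2}}dt$, $dp_i=-\frac{p_i}{\sqrt{1+\varepsilon|p_i|^2}}dt-\nabla U(q_i)dt-\sum_{j\ne i}\nabla G(q_i-q_j)dt+\sqrt2\,dW_i$ is $X_0+\sum_{i=1}^N X_i^2$ (with $X_i^2=\Delta_{p_i}$). *)

theory Defs
  imports "HOL-Analysis.Analysis"
begin

fun Ck_on :: "nat \<Rightarrow> 'a::euclidean_space set \<Rightarrow> ('a \<Rightarrow> 'b::real_normed_vector) \<Rightarrow> bool" where
  "Ck_on 0 S f = continuous_on S f"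
| "Ck_on (Suc k) S f = (f differentiable_on S \<and>
      (\<forall>v. Ck_on k S (\<lambda>x. frechet_derivative f (at x) v)))"

definition smooth_on :: "'a::euclidean_space set \<Rightarrow> ('a \<Rightarrow> 'b::real_normed_vector) \<Rightarrow> bool" where
  "smooth_on S f \<longleftrightarrow> (\<forall>k. Ck_on k S f)"

definition grad :: "('a::euclidean_space \<Rightarrow> real) \<Rightarrow> 'a \<Rightarrow> 'a" where
  "grad f x = (\<Sum>b\<in>Basis. frechet_derivative f (at x) b *\<^sub>R b)"

text \<open>Lie bracket of vector fields [X,Y] = XY - YX (as derivations).\<close>
definition lie_bracket :: "('a::euclidean_space \<Rightarrow> 'a) \<Rightarrow> ('a \<Rightarrow> 'a) \<Rightarrow> 'a \<Rightarrow> 'a" where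
  "lie_bracket X Y x = frechet_derivative Y (at x) (X x) - frechet_derivative X (at x) (Y x)"

inductive_set lie_gen :: "('a::euclidean_space \<Rightarrow> 'a) set \<Rightarrow> ('a \<Rightarrow> 'a) set" for F where
  base: "V \<in> F \<Longrightarrow> V \<in> lie_gen F"
| add: "V \<in> lie_gen F \<Longrightarrow> W \<in> lie_gen F \<Longrightarrow> (\<lambda>x. V x + W x) \<in> lie_gen F"
| scale: "V \<in> lie_gen F \<Longrightarrow> (\<lambda>x. c *\<^sub>R V x) \<in> lie_gen F"
| bracket: "V \<in> lie_gen F \<Longrightarrow> W \<in> lie_gen F \<Longrightarrow> lie_bracket V W \<in> lie_gen F"

text \<open>Left-nested brackets of length n+1 of the generators Gs:
  level 0 = Gs, level (n+1) = [V, X_k] with V at level n.\<close>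
fun nested_brackets :: "nat \<Rightarrow> ('a::euclidean_space \<Rightarrow> 'a) set \<Rightarrow> ('a \<Rightarrow> 'a) set" where
  "nested_brackets 0 Gs = Gs"
| "nested_brackets (Suc n) Gs = {lie_bracket V W | V W. V \<in> nested_brackets n Gs \<and> W \<in> Gs}"

definition hoermander_family :: "('a::euclidean_space \<Rightarrow> 'a) set \<Rightarrow> ('a \<Rightarrow> 'a) \<Rightarrow> ('a \<Rightarrow> 'a) set" where
  "hoermander_family Xs X0 = Xs \<union> (\<Union>n\<in>{1..}. nested_brackets n (insert X0 Xs))"

text \<open>State space: positions q and momenta p, N particles (index type 'n) in R^d.\<close>
type_synonym ('d, 'n) state = "(real^'d^'n) \<times> (real^'d^'n)"

definition config_domain :: "('d::finite, 'n::finite) state set" where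
  "config_domain = {(q, p). \<forall>i j. i \<noteq> j \<longrightarrow> q $ i \<noteq> q $ j}"

definition relvel :: "real \<Rightarrow> real^'d \<Rightarrow> real^'d" where
  "relvel \<epsilon> v = (1 / sqrt (1 + \<epsilon> * (norm v)\<^sup>2)) *\<^sub>R v"

definition drift_field :: "real \<Rightarrow> (real^'d::finite \<Rightarrow> real) \<Rightarrow> (real^'d \<Rightarrow> real)
     \<Rightarrow> ('d, 'n::finite) state \<Rightarrow> ('d, 'n) state" where
  "drift_field \<epsilon> U G z = (case z of (q, p) \<Rightarrow>
     ((\<chi> i. relvel \<epsilon> (p $ i)),
      (\<chi> i. - relvel \<epsilon> (p $ i) - grad U (q $ i)
             - (\<Sum>j\<in>UNIV - {i}. grad G (q $ i - q $ j)))))"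

definition dp_field :: "'n::finite \<Rightarrow> 'd::finite \<Rightarrow> ('d, 'n) state \<Rightarrow> ('d, 'n) state" where
  "dp_field i k z = (0, (\<chi> j. if j = i then axis k 1 else 0))"

end

theory Submission
  imports Defs
begin

lemma has_derivative_vec_lambda:
  assumes "\<And>i. ((\<lambda>x. f x i) has_derivative f' i) (at a within S)"
  shows "((\<lambda>x. (\<chi> i. f x i) :: 'b::euclidean_space^'n) has_derivative (\<lambda>h. \<chi> i. f' i h)) (at a within S)"
  apply (subst has_derivative_componentwise_within)
  apply (auto simp: Basis_vec_def inner_axis intro!: derivative_eq_intros assms)
  done

definition sfac :: "real \<Rightarrow> real^'d \<Rightarrow> real" where
  "sfac e v = sqrt (1 + e * (v \<bullet> v))"

definition Lrel :: "real \<Rightarrow> real^'d \<Rightarrow> real^'d \<Rightarrow> real^'d" where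
  "Lrel e v h = (1 / sfac e v) *\<^sub>R h - (e * (v \<bullet> h) / (sfac e v)^3) *\<^sub>R v"

lemma relvel_alt: "relvel e v = (1 / sfac e v) *\<^sub>R v"
  by (simp add: relvel_def sfac_def power2_norm_eq_inner)

lemma sfac_pos: "0 < e \<Longrightarrow> 0 < sfac e v"
  by (simp add: sfac_def add_pos_nonneg)

lemma relvel_deriv:
  assumes "0 < e"
  shows "(relvel e has_derivative Lrel e v) (at v)"
proof -
  define t where "t = 1 + e * (v \<bullet> v)"
  have pos: "0 < t" using assms by (simp add: t_def add_pos_nonneg)
  have g: "((\<lambda>v. 1 + e * (v \<bullet> v)) has_derivative (\<lambda>h. e * (2 * (v \<bullet> h)))) (at v)"
    by (auto intro!: derivative_eq_intros simp: inner_commute)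
  have d: "DERIV (\<lambda>t. 1 / sqrt t) t :> - (inverse (sqrt t) / 2) / (sqrt t)^2"
    using pos by (auto intro!: derivative_eq_intros simp: power2_eq_square)
  have f: "((\<lambda>v. 1 / sqrt (1 + e * (v \<bullet> v))) has_derivative
      (\<lambda>h. e * (2 * (v \<bullet> h)) * (- (inverse (sqrt t) / 2) / (sqrt t)^2))) (at v)"
    using DERIV_compose_FDERIV[OF d[unfolded t_def] g] by (simp add: t_def)
  have h: "((\<lambda>v. (1 / sqrt (1 + e * (v \<bullet> v))) *\<^sub>R v) has_derivative
      (\<lambda>h. (1 / sqrt (1 + e * (v \<bullet> v))) *\<^sub>R h + (e * (2 * (v \<bullet> h)) * (- (inverse (sqrt t) / 2) / (sqrt t)^2)) *\<^sub>R v)) (at v)"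
    by (rule has_derivative_scaleR[OF f has_derivative_ident])
  have eq: "(\<lambda>h. (1 / sqrt (1 + e * (v \<bullet> v))) *\<^sub>R h + (e * (2 * (v \<bullet> h)) * (- (inverse (sqrt t) / 2) / (sqrt t)^2)) *\<^sub>R v) = Lrel e v"
  proof
    fix h
    have "sqrt t ^ 3 = sqrt t * (sqrt t)^2" by (simp add: power3_eq_cube power2_eq_square)
    then show "(1 / sqrt (1 + e * (v \<bullet> v))) *\<^sub>R h + (e * (2 * (v \<bullet> h)) * (- (inverse (sqrt t) / 2) / (sqrt t)^2)) *\<^sub>R v = Lrel e v h"
      unfolding Lrel_def sfac_def t_def[symmetric] using pos
      by (simp add: field_simps)
  qed
  show ?thesis using h unfolding eq by (simp add: relvel_alt[abs_def] sfac_def)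
qed

lemma Lrel_surj:
  assumes "0 < e"
  shows "Lrel e v (sfac e v *\<^sub>R u + (e * sfac e v * (v \<bullet> u)) *\<^sub>R v) = u"
proof -
  define s where "s = sfac e v"
  have sp: "0 < s" using sfac_pos[OF assms] by (simp add: s_def)
  have s2: "s^2 = 1 + e * (v \<bullet> v)" unfolding s_def sfac_def using assms
    by (simp add: add_pos_nonneg)
  have vi: "v \<bullet> (s *\<^sub>R u + (e * s * (v \<bullet> u)) *\<^sub>R v) = s^3 * (v \<bullet> u)"
  proof -
    have "v \<bullet> (s *\<^sub>R u + (e * s * (v \<bullet> u)) *\<^sub>R v) = s * (v \<bullet> u) * (1 + e * (v \<bullet> v))"
      by (simp add: inner_add_right algebra_simps)
    also have "\<dots> = s^3 * (v \<bullet> u)" by (simp add: s2[symmetric] power3_eq_cube power2_eq_square)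
    finally show ?thesis .
  qed
  show ?thesis unfolding Lrel_def s_def[symmetric] vi using sp
    by (simp add: algebra_simps)
qed

lemma grad_differentiable:
  assumes "smooth_on S f" "open S" "x \<in> S"
  shows "grad f differentiable (at x)"
proof -
  have "Ck_on (Suc (Suc 0)) S f" using assms(1) unfolding smooth_on_def by blast
  then have "\<And>b. (\<lambda>x. frechet_derivative f (at x) b) differentiable_on S" by simp
  then have d: "\<And>b. (\<lambda>x. frechet_derivative f (at x) b) differentiable (at x)"
    using assms(2,3) differentiable_on_eq_differentiable_at by blast
  have "(\<lambda>x. \<Sum>b\<in>Basis. frechet_derivative f (at x) b *\<^sub>R b) differentiable (at x)"
    by (intro differentiable_sum ballI differentiable_scaleR d differentiable_const) simp
  then show ?thesis by (simp add: grad_def[abs_def])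
qed

lemma differentiable_vec_lambda:
  assumes "\<And>i. (\<lambda>x. f x i) differentiable (at a)"
  shows "(\<lambda>x. (\<chi> i. f x i) :: 'b::euclidean_space^'n) differentiable (at a)"
proof -
  from assms obtain f' where "\<And>i. ((\<lambda>x. f x i) has_derivative f' i) (at a)"
    unfolding differentiable_def by metis
  then show ?thesis unfolding differentiable_def by (blast intro: has_derivative_vec_lambda)
qed

lemma nth_differentiable: "(\<lambda>x. x $ i) differentiable F"
  by (rule bounded_linear_imp_differentiable) (rule bounded_linear_vec_nth)

lemma comp_diff: "g differentiable (at (f x)) \<Longrightarrow> f differentiable (at x) \<Longrightarrow> (\<lambda>x. g (f x)) differentiable (at x)"
  using differentiable_chain_at[of f x g] by (simp add: o_def)

definition Bfield :: "real \<Rightarrow> (real^'d::finite \<Rightarrow> real) \<Rightarrow> (real^'d \<Rightarrow> real)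
     \<Rightarrow> ('d, 'n::finite) state \<Rightarrow> real^'d^'n" where
  "Bfield e U G z = (\<chi> i. - relvel e (snd z $ i) - grad U (fst z $ i)
             - (\<Sum>j\<in>UNIV - {i}. grad G (fst z $ i - fst z $ j)))"

definition Afield :: "real \<Rightarrow> real^'d::finite^'n::finite \<Rightarrow> real^'d^'n" where
  "Afield e p = (\<chi> i. relvel e (p $ i))"

lemma drift_alt: "drift_field e U G = (\<lambda>z. (Afield e (snd z), Bfield e U G z))"
  by (auto simp: drift_field_def Afield_def Bfield_def fun_eq_iff split: prod.split)

lemma drift_differentiable:
  fixes z :: "('d::finite, 'n::finite) state" and U :: "real^'d \<Rightarrow> real"
  assumes "0 < e" "smooth_on UNIV U" "smooth_on (- {0}) G" "z \<in> config_domain"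
  shows "drift_field e U G differentiable (at z)"
proof -
  obtain q p where z: "z = (q, p)" by fastforce
  have dist: "\<And>i j. i \<noteq> j \<Longrightarrow> q $ i \<noteq> q $ j" using assms(4) by (simp add: z config_domain_def)
  have rv: "(\<lambda>z::('d,'n) state. relvel e (snd z $ i)) differentiable (at w)" for i :: 'n and w :: "('d,'n) state"
    by (rule comp_diff[where f="\<lambda>z. snd z $ i"]) (auto intro: differentiableI relvel_deriv[OF assms(1)]
       bounded_linear_imp_differentiable bounded_linear_compose[OF bounded_linear_vec_nth bounded_linear_snd])
  have lq: "(\<lambda>z::('d,'n) state. fst z $ i) differentiable (at w)" for i :: 'n and w :: "('d,'n) state"
    by (auto intro: bounded_linear_imp_differentiable bounded_linear_compose[OF bounded_linear_vec_nth bounded_linear_fst])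
  have gu: "(\<lambda>z::('d,'n) state. grad U (fst z $ i)) differentiable (at w)" for i :: 'n and w :: "('d,'n) state"
    by (rule comp_diff[OF grad_differentiable[OF assms(2)] lq]) auto
  have gg: "(\<lambda>z::('d,'n) state. grad G (fst z $ i - fst z $ j)) differentiable (at z)" if "j \<noteq> i" for i j
    by (rule comp_diff[OF grad_differentiable[OF assms(3)]]) (use dist that lq in \<open>auto simp: z\<close>)
  have B: "Bfield e U G differentiable (at z)"
    unfolding Bfield_def[abs_def]
    by (intro differentiable_vec_lambda differentiable_diff differentiable_minus rv gu differentiable_sum ballI gg) auto
  have A: "(\<lambda>z. Afield e (snd z :: real^'d^'n)) differentiable (at z)"
    unfolding Afield_def
    by (intro differentiable_vec_lambda rv)
  show ?thesis unfolding drift_alt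
    using A B by (rule differentiable_Pair)
qed

lemma Afield_deriv:
  assumes "0 < e"
  shows "(Afield e has_derivative (\<lambda>h. \<chi> i. Lrel e (p $ i) (h $ i))) (at p)"
proof -
  have "((\<lambda>x. relvel e (x $ i)) has_derivative (\<lambda>h. Lrel e (p $ i) (h $ i))) (at p)" for i
    using has_derivative_compose[OF bounded_linear.has_derivative[OF bounded_linear_vec_nth[of i] has_derivative_ident]
        relvel_deriv[OF assms, of "p $ i"]] by simp
  then show ?thesis unfolding Afield_def[abs_def] by (rule has_derivative_vec_lambda)
qed

lemma subspace_lin_vimage: "linear f \<Longrightarrow> subspace S \<Longrightarrow> subspace {w. f w \<in> S}"
  unfolding subspace_def by (auto simp: linear_add linear_scale linear_0)

theorem lemma3p6:
  fixes \<epsilon> :: real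
    and U :: "real^'d::finite \<Rightarrow> real"
    and G :: "real^'d \<Rightarrow> real"
  assumes "0 < \<epsilon>" and "\<epsilon> < 1"
    and "smooth_on UNIV U"
    and "smooth_on (- {0}) G"
  shows "\<forall>z \<in> (config_domain :: ('d, 'n::finite) state set).
           span {V z | V. V \<in> lie_gen (hoermander_family
                     {dp_field i k | (i::'n) (k::'d). True}
                     (drift_field \<epsilon> U G))} = UNIV"
proof (intro ballI)
  fix z :: "('d,'n) state"
  assume zD: "z \<in> config_domain"
  obtain q p where z: "z = (q, p)" by fastforce
  let ?X0 = "drift_field \<epsilon> U G :: ('d,'n) state \<Rightarrow> ('d,'n) state"
  let ?Xs = "{dp_field i k | (i::'n) (k::'d). True}"
  let ?F = "hoermander_family ?Xs ?X0"
  define Sp where "Sp = span {V z | V. V \<in> lie_gen ?F}"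
  define D where "D = frechet_derivative ?X0 (at z)"
  have XD: "(?X0 has_derivative D) (at z)"
    unfolding D_def using drift_differentiable[OF assms(1,3,4) zD] frechet_derivative_works by blast
  have lin: "linear D" using has_derivative_bounded_linear[OF XD] bounded_linear.linear by blast
  have inSp: "V z \<in> Sp" if "V \<in> lie_gen ?F" for V
    unfolding Sp_def using that by (auto intro: span_base)
  have dpF: "dp_field i k \<in> lie_gen ?F" for i k
    by (rule lie_gen.base) (auto simp: hoermander_family_def)
  have brF: "lie_bracket (dp_field i k) ?X0 \<in> lie_gen ?F" for i k
  proof (rule lie_gen.base)
    have "lie_bracket (dp_field i k) ?X0 \<in> nested_brackets 1 (insert ?X0 ?Xs)"
      by auto
    then show "lie_bracket (dp_field i k) ?X0 \<in> ?F"
      unfolding hoermander_family_def by (intro UnI2 UN_I[of 1]) auto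
  qed
  have dpz: "dp_field i k w = (0, axis i (axis k 1))" for i k w
    unfolding dp_field_def by (simp add: axis_def[of i "axis k 1"])
  have dpconst: "frechet_derivative (dp_field i k) (at z) = (\<lambda>h. 0)" for i k
  proof -
    have "dp_field i k = (\<lambda>w. (0, axis i (axis k 1)))" using dpz by blast
    then have "(dp_field i k has_derivative (\<lambda>h. 0)) (at z)" by simp
    then show ?thesis by (metis frechet_derivative_at)
  qed
  have brz: "lie_bracket (dp_field i k) ?X0 z = D (0, axis i (axis k 1))" for i k
    by (simp add: lie_bracket_def dpz D_def dpconst)
  have basis: "\<exists>i k. b = axis i (axis k (1::real))" if "b \<in> (Basis :: (real^'d^'n) set)" for b
    using that by (auto simp: Basis_vec_def)
  have sS: "subspace Sp" unfolding Sp_def by (rule subspace_span)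
  have lin0: "linear (\<lambda>w::real^'d^'n. (0::real^'d^'n, w))"
    by (rule linearI) (auto simp: zero_prod_def)
  have linD0: "linear (\<lambda>w::real^'d^'n. D (0, w))"
    using linear_compose[OF lin0 lin] by (simp add: o_def)
  have all0: "(0, w) \<in> Sp" for w
  proof -
    have "Basis \<subseteq> {w. (0, w) \<in> Sp}"
    proof
      fix b :: "real^'d^'n" assume "b \<in> Basis"
      then obtain i k where "b = axis i (axis k 1)" using basis by blast
      then show "b \<in> {w. (0, w) \<in> Sp}" using inSp[OF dpF, of i k] dpz[of i k z] by simp
    qed
    then have "span Basis \<subseteq> {w. (0, w) \<in> Sp}"
      by (rule span_minimal[OF _ subspace_lin_vimage[OF lin0 sS]])
    then show ?thesis by auto
  qed
  have allD: "D (0, w) \<in> Sp" for w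
  proof -
    have "Basis \<subseteq> {w. D (0, w) \<in> Sp}"
    proof
      fix b :: "real^'d^'n" assume "b \<in> Basis"
      then obtain i k where "b = axis i (axis k 1)" using basis by blast
      then show "b \<in> {w. D (0, w) \<in> Sp}" using inSp[OF brF, of i k] brz[of i k] by simp
    qed
    then have "span Basis \<subseteq> {w. D (0, w) \<in> Sp}"
      by (rule span_minimal[OF _ subspace_lin_vimage[OF linD0 sS]])
    then show ?thesis by auto
  qed
  define DA where "DA = (\<lambda>h::real^'d^'n. \<chi> i. Lrel \<epsilon> (p $ i) (h $ i))"
  have fstD: "(\<lambda>h. fst (D h)) = (\<lambda>h. DA (snd h))"
  proof (rule has_derivative_unique)
    show "((\<lambda>w. fst (?X0 w)) has_derivative (\<lambda>h. fst (D h))) (at z)"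
      by (rule has_derivative_fst[OF XD])
    have "((\<lambda>w. Afield \<epsilon> (snd w)) has_derivative (\<lambda>h. DA (snd h))) (at z)"
      unfolding DA_def
      by (rule has_derivative_compose[OF has_derivative_snd[OF has_derivative_ident]])
         (use Afield_deriv[OF assms(1), of p] in \<open>simp add: z\<close>)
    then show "((\<lambda>w. fst (?X0 w)) has_derivative (\<lambda>h. DA (snd h))) (at z)"
      by (simp add: drift_alt)
  qed
  have "x \<in> Sp" for x
  proof -
    obtain a b where x: "x = (a, b)" by fastforce
    define w where "w = (\<chi> i. sfac \<epsilon> (p $ i) *\<^sub>R a $ i + (\<epsilon> * sfac \<epsilon> (p $ i) * (p $ i \<bullet> a $ i)) *\<^sub>R p $ i)"
    have "DA w = a" unfolding DA_def w_def
      by (simp add: Lrel_surj[OF assms(1)] vec_eq_iff)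
    then have fa: "fst (D (0, w)) = a" using fun_cong[OF fstD, of "(0,w)"] by simp
    have "x = D (0, w) + (0, b - snd (D (0, w)))" using fa x by (simp add: prod_eq_iff)
    then show ?thesis using subspace_add[OF sS allD all0] by metis
  qed
  then show "span {V z | V. V \<in> lie_gen ?F} = UNIV" unfolding Sp_def by auto
qed
end
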